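(* Let $\mathcal M$ be a general model for CTT$_{\rm qe}$, let $\mathbf A_\alpha,\mathbf B_\alpha$ be expressions of the same type, and let $\mathbf C_o$ be a formula. Let $\mathbf C'_o$ be the result of replacing one occurrence of $\mathbf A_\alpha$ in $\mathbf C_o$ by an occurrence of $\mathbf B_\alpha$, where this occurrence of $\mathbf A_\alpha$ is not within a quotation, is not the bound-variable position $\mathbf x$ of an abstraction $\lambda\mathbf x.\mathbf D$, and is not the type-indicating second component $\mathbf E_\beta$ of an evaluation $[\![\mathbf D_\epsilon]\!]_{\mathbf E_\beta}$. If $\mathcal M\models\mathbf A_\alpha=\mathbf B_\alpha$ and $\mathcal M\models\mathbf C_o$, then $\mathcal M\models\mathbf C'_o$.
   Context: The logic CTT$_{\rm qe}$. Types: $\iota$ (individuals), $o$ (truth values), $\epsilon$ (constructions), and $(\alpha\to\beta)$ for types $\alpha,\beta$. Let $\mathcal V$ be a set of typed symbols (variables) containing denumerably many symbols $\mathbf{x}_\alpha$ of each type $\alpha$, and $\mathcal C$ a disjoint set of typed symbols (constants) containing the logical constants $=_{\alpha\to\alpha\to o}$ (each $\alpha$), $\mathsf{is\text{-}var}_{\epsilon\to o}$, $\mathsf{is\text{-}var}^\alpha_{\epsilon\to o}$, $\mathsf{is\text{-}con}_{\epsilon\to o}$, $\mathsf{is\text{-}con}^\alpha_{\epsilon\to o}$, $\mathsf{app}_{\epsilon\to\epsilon\to\epsilon}$, $\mathsf{abs}_{\epsilon\to\epsilon\to\epsilon}$, $\mathsf{quo}_{\epsilon\to\epsilon}$, $\mathsf{is\text{-}expr}_{\epsilon\to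 o}$, $\mathsf{is\text{-}expr}^\alpha_{\epsilon\to o}$ (each $\alpha$), $\sqsubset_{\epsilon\to\epsilon\to o}$, $\mathsf{is\text{-}free\text{-}in}_{\epsilon\to\epsilon\to o}$. Expressions $\mathbf{A}_\alpha$ (subscript = type) are defined inductively: (1) a variable $\mathbf{x}_\alpha$; (2) a constant $\mathbf{c}_\alpha$; (3) application $(\mathbf{F}_{\alpha\to\beta}\,\mathbf{A}_\alpha)$ of type $\beta$; (4) abstraction $(\lambda\mathbf{x}_\alpha.\mathbf{B}_\beta)$ of type $\alpha\to\beta$; (5) quotation $\ulcorner\mathbf{A}_\alpha\urcorner$ of type $\epsilon$, formed only if $\mathbf{A}_\alpha$ is eval-free; (6) evaluation $[\![\mathbf{A}_\epsilon]\!]_{\mathbf{B}_\beta}$ of type $\beta$, written $[\![\mathbf{A}_\epsilon]\!]_\beta$ (the second component only fixes the type). An expression is eval-free if built using rules (1)–(5) only. A formula is an expression of type $o$. In an eval-free expression, an occurrence of a variable $\mathbf{x}_\alpha$ is free if it is not inside a quotation and not inside a subexpression of the form $\lambda\mathbf{x}_\alpha.\mathbf{C}$; $\mathbf{x}_\alpha$ is free in $\mathbf{B}$ if it has a free occurrence there. Constructions: the smallest set of expressions of type $\epsilon$ containing all $\ulcorner\mathbf{x}_\alpha\urcorner$ and $\ulcorner\mathbf{c}_\alpha\urcorner$ and closed under forming $\mathsf{app}\,\mathbf{A}_\epsilon\,\mathbf{B}_\epsilon$, $\mathsf{abs}\,\mathbf{A}_\epsilon\,\mathbf{B}_\epsilon$,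 $\mathsf{quo}\,\mathbf{A}_\epsilon$. The injective map $\mathcal E$ from eval-free expressions to constructions: $\mathcal E(\mathbf{x}_\alpha)=\ulcorner\mathbf{x}_\alpha\urcorner$, $\mathcal E(\mathbf{c}_\alpha)=\ulcorner\mathbf{c}_\alpha\urcorner$, $\mathcal E(\mathbf{F}\,\mathbf{A})=\mathsf{app}\,\mathcal E(\mathbf F)\,\mathcal E(\mathbf A)$, $\mathcal E(\lambda\mathbf{x}_\alpha.\mathbf B)=\mathsf{abs}\,\mathcal E(\mathbf x_\alpha)\,\mathcal E(\mathbf B)$, $\mathcal E(\ulcorner\mathbf A\urcorner)=\mathsf{quo}\,\mathcal E(\mathbf A)$. Abbreviations: $\mathbf A_\alpha=\mathbf B_\alpha$ is $=_{\alpha\to\alpha\to o}\mathbf A_\alpha\mathbf B_\alpha$; $T_o$ is $(=_{o\to o\to o}\,=\,=_{o\to o\to o})$; $F_o$ is $(\lambda x_o.T_o)=(\lambda x_o.x_o)$; $\forall\mathbf x_\alpha.\mathbf A_o$ is $(\lambda\mathbf x_\alpha.T_o)=(\lambda\mathbf x_\alpha.\mathbf A_o)$; $\neg\mathbf A_o$ is $=_{o\to o\to o}F_o\,\mathbf A_o$; $\exists\mathbf x_\alpha.\mathbf A_o$ is $\neg\forall\mathbf x_\alpha.\neg\mathbf A_o$; $\mathbf A\neq\mathbf B$ is $\neg(\mathbf A=\mathbf B)$; $\mathsf{IS\text{-}EFFECTIVE\text{-}IN}(\mathbf x_\alpha,\mathbf B_\beta)$ is $\exists\mathbf y_\alpha.((\lambda\mathbf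 x_\alpha.\mathbf B_\beta)\,\mathbf y_\alpha\neq\mathbf B_\beta)$ for a variable $\mathbf y_\alpha$ distinct from $\mathbf x_\alpha$. Semantics. A frame is $\{D_\alpha\}$ with $D_\iota$ nonempty, $D_o=\{\mathrm T,\mathrm F\}$, $D_\epsilon$ the set of all constructions, and $D_{\alpha\to\beta}$ some set of total functions $D_\alpha\to D_\beta$. An interpretation $(\{D_\alpha\},I)$ has $I(\mathbf c_\alpha)\in D_\alpha$ for each constant, with: $I(=_{\alpha\to\alpha\to o})$ the (curried) identity relation on $D_\alpha$; $I(\mathsf{is\text{-}var})(A)=\mathrm T$ iff $A=\ulcorner\mathbf x_\beta\urcorner$ for some variable of some type; $I(\mathsf{is\text{-}var}^\alpha)(A)=\mathrm T$ iff $A=\ulcorner\mathbf x_\alpha\urcorner$ for some variable of type $\alpha$; likewise $\mathsf{is\text{-}con}$, $\mathsf{is\text{-}con}^\alpha$ with constants; $I(\mathsf{app})(A)(B)$, $I(\mathsf{abs})(A)(B)$, $I(\mathsf{quo})(A)$ are the constructions $\mathsf{app}\,A\,B$, $\mathsf{abs}\,A\,B$, $\mathsf{quo}\,A$; $I(\mathsf{is\text{-}expr})(A)=\mathrm T$ iff $A=\mathcal E(\mathbf B_\beta)$ for some eval-free $\mathbf B_\beta$ of some type; $I(\mathsf{is\text{-}expr}^\alpha)(A)=\mathrm T$ iff $A=\mathcal E(\mathbf B_\alpha)$ for some eval-free $\mathbf B_\alpha$; $I(\sqsubset)(A)(B)=\mathrm T$ iff $A$ is a proper subexpression of $B$; $I(\mathsf{is\text{-}free\text{-}in})(A)(B)=\mathrm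 T$ iff $A=\ulcorner\mathbf x_\alpha\urcorner$, $B=\mathcal E(\mathbf C_\beta)$ for some eval-free $\mathbf C_\beta$, and $\mathbf x_\alpha$ is free in $\mathbf C_\beta$. An assignment $\phi$ maps each $\mathbf x_\alpha\in\mathcal V$ into $D_\alpha$; $\phi[\mathbf x_\alpha\mapsto d]$ is the usual modification. A general model is an interpretation $\mathcal M$ for which there is a valuation $V^{\mathcal M}_\phi(\mathbf C_\gamma)\in D_\gamma$ (for all $\phi$ and all expressions) with: (V1) $V_\phi(\mathbf x_\alpha)=\phi(\mathbf x_\alpha)$; (V2) $V_\phi(\mathbf c_\alpha)=I(\mathbf c_\alpha)$; (V3) $V_\phi(\mathbf F\,\mathbf A)=V_\phi(\mathbf F)(V_\phi(\mathbf A))$; (V4) $V_\phi(\lambda\mathbf x_\alpha.\mathbf B_\beta)$ is the $f\in D_{\alpha\to\beta}$ with $f(d)=V_{\phi[\mathbf x_\alpha\mapsto d]}(\mathbf B_\beta)$; (V5) $V_\phi(\ulcorner\mathbf A_\alpha\urcorner)=\mathcal E(\mathbf A_\alpha)$; (V6) if $V_\phi(\mathsf{is\text{-}expr}^\beta\,\mathbf A_\epsilon)=\mathrm T$ then $V_\phi([\![\mathbf A_\epsilon]\!]_\beta)=V_\phi(\mathcal E^{-1}(V_\phi(\mathbf A_\epsilon)))$; (V7) for each $\beta$ there is a fixed $d_\beta\in D_\beta$ such that $V_\phi([\![\mathbf A_\epsilon]\!]_\beta)=d_\beta$ whenever $V_\phi(\mathsf{is\text{-}expr}^\beta\,\mathbf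 A_\epsilon)=\mathrm F$. $\mathcal M\models\mathbf A_o$ ($\mathbf A_o$ valid in $\mathcal M$) iff $V_\phi(\mathbf A_o)=\mathrm T$ for all $\phi$; $\models\mathbf A_o$ (valid in CTT$_{\rm qe}$) iff valid in every general model. A standard model is an interpretation in which every $D_{\alpha\to\beta}$ is the set of all total functions $D_\alpha\to D_\beta$. *)

theory Defs
  imports Main
begin

datatype ty = Iota | Omic | Eps | Fun ty ty

text \<open>Constants: the logical constants, plus denumerably many nonlogical
  constants of each type.\<close>
datatype con =
    Eq ty | IsVar | IsVarT ty | IsCon | IsConT ty
  | AppC | AbsC | QuoC | IsExpr | IsExprT ty
  | SubC | IsFreeIn | Other nat ty

fun ctype :: "con \<Rightarrow> ty" where
  "ctype (Eq a) = Fun a (Fun a Omic)"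
| "ctype IsVar = Fun Eps Omic"
| "ctype (IsVarT a) = Fun Eps Omic"
| "ctype IsCon = Fun Eps Omic"
| "ctype (IsConT a) = Fun Eps Omic"
| "ctype AppC = Fun Eps (Fun Eps Eps)"
| "ctype AbsC = Fun Eps (Fun Eps Eps)"
| "ctype QuoC = Fun Eps Eps"
| "ctype IsExpr = Fun Eps Omic"
| "ctype (IsExprT a) = Fun Eps Omic"
| "ctype SubC = Fun Eps (Fun Eps Omic)"
| "ctype IsFreeIn = Fun Eps (Fun Eps Omic)"
| "ctype (Other n a) = a"

text \<open>Raw expressions. A variable is a pair (name, type). Eval A E
  is the evaluation with type-indicating second component E.\<close>
datatype expr =
    Var nat ty
  | Con con
  | Ap expr expr
  | Lam nat ty expr
  | Quote expr
  | Eval expr expr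

fun evalfree :: "expr \<Rightarrow> bool" where
  "evalfree (Var x a) = True"
| "evalfree (Con c) = True"
| "evalfree (Ap F A) = (evalfree F \<and> evalfree A)"
| "evalfree (Lam x a B) = evalfree B"
| "evalfree (Quote A) = evalfree A"
| "evalfree (Eval A E) = False"

inductive wt :: "expr \<Rightarrow> ty \<Rightarrow> bool" where
  wt_var: "wt (Var x a) a"
| wt_con: "wt (Con c) (ctype c)"
| wt_ap: "wt F (Fun a b) \<Longrightarrow> wt A a \<Longrightarrow> wt (Ap F A) b"
| wt_lam: "wt B b \<Longrightarrow> wt (Lam x a B) (Fun a b)"
| wt_quote: "wt A a \<Longrightarrow> evalfree A \<Longrightarrow> wt (Quote A) Eps"
| wt_eval: "wt A Eps \<Longrightarrow> wt E b \<Longrightarrow> wt (Eval A E) b"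

text \<open>Free occurrence of variable (x,a) in an eval-free expression.\<close>
fun free_in :: "nat \<Rightarrow> ty \<Rightarrow> expr \<Rightarrow> bool" where
  "free_in x a (Var y b) = (x = y \<and> a = b)"
| "free_in x a (Con c) = False"
| "free_in x a (Ap F A) = (free_in x a F \<or> free_in x a A)"
| "free_in x a (Lam y b B) = ((y, b) \<noteq> (x, a) \<and> free_in x a B)"
| "free_in x a (Quote A) = False"
| "free_in x a (Eval A E) = False"

fun subexprs :: "expr \<Rightarrow> expr set" where
  "subexprs (Var x a) = {Var x a}"
| "subexprs (Con c) = {Con c}"
| "subexprs (Ap F A) = insert (Ap F A) (subexprs F \<union> subexprs A)"
| "subexprs (Lam x a B) = insert (Lam x a B) (insert (Var x a) (subexprs B))"
| "subexprs (Quote A) = insert (Quote A) (subexprs A)"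
| "subexprs (Eval A E) = insert (Eval A E) (subexprs A \<union> subexprs E)"

definition proper_subexpr :: "expr \<Rightarrow> expr \<Rightarrow> bool" where
  "proper_subexpr A B \<longleftrightarrow> A \<in> subexprs B \<and> A \<noteq> B"

inductive is_constr :: "expr \<Rightarrow> bool" where
  "is_constr (Quote (Var x a))"
| "is_constr (Quote (Con c))"
| "is_constr A \<Longrightarrow> is_constr B \<Longrightarrow> is_constr (Ap (Ap (Con AppC) A) B)"
| "is_constr A \<Longrightarrow> is_constr B \<Longrightarrow> is_constr (Ap (Ap (Con AbsC) A) B)"
| "is_constr A \<Longrightarrow> is_constr (Ap (Con QuoC) A)"

fun enc :: "expr \<Rightarrow> expr" where
  "enc (Var x a) = Quote (Var x a)"
| "enc (Con c) = Quote (Con c)"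
| "enc (Ap F A) = Ap (Ap (Con AppC) (enc F)) (enc A)"
| "enc (Lam x a B) = Ap (Ap (Con AbsC) (enc (Var x a))) (enc B)"
| "enc (Quote A) = Ap (Con QuoC) (enc A)"
| "enc (Eval A E) = undefined"  \<comment> \<open>never used: E is only applied to eval-free expressions\<close>

definition enc_inv :: "expr \<Rightarrow> expr" where
  "enc_inv C = (THE B. evalfree B \<and> enc B = C)"

text \<open>A structure over a universe type 'u: domains Dom, an application
  operation ap giving the functions in the function domains, an injection
  tv of truth values, an injection emb of constructions, the
  interpretation I of constants, and the valuation V.\<close>
record 'u model =
  Dom :: "ty \<Rightarrow> 'u set"
  ap :: "'u \<Rightarrow> 'u \<Rightarrow> 'u"
  tv :: "bool \<Rightarrow> 'u"
  emb :: "expr \<Rightarrow> 'u"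
  Icon :: "con \<Rightarrow> 'u"
  Val :: "(nat \<times> ty \<Rightarrow> 'u) \<Rightarrow> expr \<Rightarrow> 'u"

definition frame :: "'u model \<Rightarrow> bool" where
  "frame M \<longleftrightarrow>
     Dom M Iota \<noteq> {}
   \<and> inj (tv M) \<and> Dom M Omic = range (tv M)
   \<and> inj_on (emb M) {A. is_constr A} \<and> Dom M Eps = emb M ` {A. is_constr A}
   \<and> (\<forall>a b. \<forall>f\<in>Dom M (Fun a b). \<forall>x\<in>Dom M a. ap M f x \<in> Dom M b)
   \<and> (\<forall>a b. \<forall>f\<in>Dom M (Fun a b). \<forall>g\<in>Dom M (Fun a b).
        (\<forall>x\<in>Dom M a. ap M f x = ap M g x) \<longrightarrow> f = g)"

abbreviation ap2 :: "'u model \<Rightarrow> 'u \<Rightarrow> 'u \<Rightarrow> 'u \<Rightarrow> 'u" where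
  "ap2 M f x y \<equiv> ap M (ap M f x) y"

definition interp :: "'u model \<Rightarrow> bool" where
  "interp M \<longleftrightarrow>
     frame M
   \<and> (\<forall>c. Icon M c \<in> Dom M (ctype c))
   \<and> (\<forall>a. \<forall>x\<in>Dom M a. \<forall>y\<in>Dom M a. ap2 M (Icon M (Eq a)) x y = tv M (x = y))
   \<and> (\<forall>A. is_constr A \<longrightarrow>
        ap M (Icon M IsVar) (emb M A) = tv M (\<exists>x b. A = Quote (Var x b))
      \<and> (\<forall>a. ap M (Icon M (IsVarT a)) (emb M A) = tv M (\<exists>x. A = Quote (Var x a)))
      \<and> ap M (Icon M IsCon) (emb M A) = tv M (\<exists>c. A = Quote (Con c))
      \<and> (\<forall>a. ap M (Icon M (IsConT a)) (emb M A) = tv M (\<exists>c. ctype c = a \<and> A = Quote (Con c)))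
      \<and> ap M (Icon M QuoC) (emb M A) = emb M (Ap (Con QuoC) A)
      \<and> ap M (Icon M IsExpr) (emb M A) = tv M (\<exists>B b. wt B b \<and> evalfree B \<and> A = enc B)
      \<and> (\<forall>a. ap M (Icon M (IsExprT a)) (emb M A) = tv M (\<exists>B. wt B a \<and> evalfree B \<and> A = enc B))
      \<and> (\<forall>B. is_constr B \<longrightarrow>
           ap2 M (Icon M AppC) (emb M A) (emb M B) = emb M (Ap (Ap (Con AppC) A) B)
         \<and> ap2 M (Icon M AbsC) (emb M A) (emb M B) = emb M (Ap (Ap (Con AbsC) A) B)
         \<and> ap2 M (Icon M SubC) (emb M A) (emb M B) = tv M (proper_subexpr A B)
         \<and> ap2 M (Icon M IsFreeIn) (emb M A) (emb M B) =
             tv M (\<exists>x a C b. A = Quote (Var x a) \<and> wt C b \<and> evalfree C \<and> B = enc C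
                              \<and> free_in x a C)))"

definition assignment :: "'u model \<Rightarrow> (nat \<times> ty \<Rightarrow> 'u) \<Rightarrow> bool" where
  "assignment M \<phi> \<longleftrightarrow> (\<forall>x a. \<phi> (x, a) \<in> Dom M a)"

text \<open>General model: an interpretation together with a valuation satisfying (V1)-(V7).\<close>
definition general_model :: "'u model \<Rightarrow> bool" where
  "general_model M \<longleftrightarrow>
     interp M
   \<and> (\<forall>\<phi>. assignment M \<phi> \<longrightarrow>
        (\<forall>C g. wt C g \<longrightarrow> Val M \<phi> C \<in> Dom M g)
      \<and> (\<forall>x a. Val M \<phi> (Var x a) = \<phi> (x, a))
      \<and> (\<forall>c. Val M \<phi> (Con c) = Icon M c)
      \<and> (\<forall>F A a b. wt F (Fun a b) \<longrightarrow> wt A a \<longrightarrow>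
           Val M \<phi> (Ap F A) = ap M (Val M \<phi> F) (Val M \<phi> A))
      \<and> (\<forall>x a B b. wt B b \<longrightarrow>
           (\<forall>d\<in>Dom M a. ap M (Val M \<phi> (Lam x a B)) d = Val M (\<phi>((x, a) := d)) B))
      \<and> (\<forall>A a. wt A a \<longrightarrow> evalfree A \<longrightarrow> Val M \<phi> (Quote A) = emb M (enc A))
      \<and> (\<forall>A E b. wt A Eps \<longrightarrow> wt E b \<longrightarrow>
           Val M \<phi> (Ap (Con (IsExprT b)) A) = tv M True \<longrightarrow>
           Val M \<phi> (Eval A E) =
             Val M \<phi> (enc_inv (the_inv_into {B. is_constr B} (emb M) (Val M \<phi> A)))))
   \<and> (\<exists>d. (\<forall>b. d b \<in> Dom M b)
        \<and> (\<forall>\<phi> A E b. assignment M \<phi> \<longrightarrow> wt A Eps \<longrightarrow> wt E b \<longrightarrow>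
             Val M \<phi> (Ap (Con (IsExprT b)) A) = tv M False \<longrightarrow>
             Val M \<phi> (Eval A E) = d b))"

definition valid_in :: "'u model \<Rightarrow> expr \<Rightarrow> bool" where
  "valid_in M C \<longleftrightarrow> (\<forall>\<phi>. assignment M \<phi> \<longrightarrow> Val M \<phi> C = tv M True)"

abbreviation eq_expr :: "ty \<Rightarrow> expr \<Rightarrow> expr \<Rightarrow> expr" where
  "eq_expr a A B \<equiv> Ap (Ap (Con (Eq a)) A) B"

text \<open>One-hole contexts whose hole is not inside a quotation, not the bound
  variable of an abstraction (not an expression position here), and not the
  type-indicating second component of an evaluation.\<close>
datatype ctxt =
    Hole
  | CApL ctxt expr
  | CApR expr ctxt
  | CLam nat ty ctxt
  | CEvalL ctxt expr

fun fill :: "ctxt \<Rightarrow> expr \<Rightarrow> expr" where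
  "fill Hole X = X"
| "fill (CApL K A) X = Ap (fill K X) A"
| "fill (CApR F K) X = Ap F (fill K X)"
| "fill (CLam x a K) X = Lam x a (fill K X)"
| "fill (CEvalL K E) X = Eval (fill K X) E"

end

theory Submission
  imports Defs
begin

inductive_cases wtE_var: "wt (Var x a) t"
inductive_cases wtE_con: "wt (Con c) t"
inductive_cases wtE_ap: "wt (Ap F A) t"
inductive_cases wtE_lam: "wt (Lam x a B) t"
inductive_cases wtE_quote: "wt (Quote A) t"
inductive_cases wtE_eval: "wt (Eval A E) t"

lemma wt_unique: "wt e t \<Longrightarrow> wt e t' \<Longrightarrow> t = t'"
proof (induction e t arbitrary: t' rule: wt.induct)
  case (wt_var x a) then show ?case by (blast elim: wtE_var)
next
  case (wt_con c) then show ?case by (blast elim: wtE_con)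
next
  case (wt_ap F a b A)
  from wt_ap.prems obtain a' where "wt F (Fun a' t')" by (blast elim: wtE_ap)
  then have "Fun a b = Fun a' t'" by (rule wt_ap.IH(1))
  then show ?case by simp
next
  case (wt_lam B b x a)
  from wt_lam.prems obtain b' where "t' = Fun a b'" "wt B b'" by (blast elim: wtE_lam)
  then show ?case using wt_lam.IH by simp
next
  case (wt_quote A a) then show ?case by (blast elim: wtE_quote)
next
  case (wt_eval A E b)
  from wt_eval.prems have "wt E t'" by (blast elim: wtE_eval)
  then show ?case by (rule wt_eval.IH(2))
qed

lemma wt_fill: "wt (fill K A) t \<Longrightarrow> wt A a \<Longrightarrow> wt B a \<Longrightarrow> wt (fill K B) t"
proof (induction K arbitrary: t)
  case Hole then show ?case using wt_unique by fastforce
next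
  case (CApL K E) then show ?case by (auto elim!: wtE_ap intro: wt.intros)
next
  case (CApR F K) then show ?case by (auto elim!: wtE_ap intro: wt.intros)
next
  case (CLam x b K) then show ?case by (auto elim!: wtE_lam intro: wt.intros)
next
  case (CEvalL K E) then show ?case by (auto elim!: wtE_eval intro: wt.intros)
qed

lemma assign_upd: "assignment M \<phi> \<Longrightarrow> d \<in> Dom M a \<Longrightarrow> assignment M (\<phi>((x,a) := d))"
  unfolding assignment_def by auto

lemma gm_dom: "general_model M \<Longrightarrow> assignment M \<phi> \<Longrightarrow> wt C g \<Longrightarrow> Val M \<phi> C \<in> Dom M g"
  unfolding general_model_def by meson
lemma gm_con: "general_model M \<Longrightarrow> assignment M \<phi> \<Longrightarrow> Val M \<phi> (Con c) = Icon M c"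
  unfolding general_model_def by meson
lemma gm_ap: "general_model M \<Longrightarrow> assignment M \<phi> \<Longrightarrow> wt F (Fun a b) \<Longrightarrow> wt A a \<Longrightarrow>
   Val M \<phi> (Ap F A) = ap M (Val M \<phi> F) (Val M \<phi> A)"
  unfolding general_model_def by meson
lemma gm_lam: "general_model M \<Longrightarrow> assignment M \<phi> \<Longrightarrow> wt B b \<Longrightarrow> d \<in> Dom M a \<Longrightarrow>
   ap M (Val M \<phi> (Lam x a B)) d = Val M (\<phi>((x, a) := d)) B"
  unfolding general_model_def by meson
lemma gm_evT: "general_model M \<Longrightarrow> assignment M \<phi> \<Longrightarrow> wt A Eps \<Longrightarrow> wt E b \<Longrightarrow>
   Val M \<phi> (Ap (Con (IsExprT b)) A) = tv M True \<Longrightarrow>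
   Val M \<phi> (Eval A E) = Val M \<phi> (enc_inv (the_inv_into {B. is_constr B} (emb M) (Val M \<phi> A)))"
  unfolding general_model_def by meson
lemma gm_evF: "general_model M \<Longrightarrow> \<exists>d. \<forall>\<phi> A E b. assignment M \<phi> \<longrightarrow> wt A Eps \<longrightarrow> wt E b \<longrightarrow>
             Val M \<phi> (Ap (Con (IsExprT b)) A) = tv M False \<longrightarrow>
             Val M \<phi> (Eval A E) = d b"
  unfolding general_model_def by meson
lemma gm_frame: "general_model M \<Longrightarrow> frame M"
  unfolding general_model_def interp_def by blast
lemma gm_eq: "general_model M \<Longrightarrow> x \<in> Dom M a \<Longrightarrow> y \<in> Dom M a \<Longrightarrow> ap M (ap M (Icon M (Eq a)) x) y = tv M (x = y)"
  unfolding general_model_def interp_def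
  apply (drule conjunct1)
  apply (drule conjunct2, drule conjunct2, drule conjunct1)
  by simp

lemma fill_eq:
  assumes gm: "general_model M"
    and wA: "wt A a" and wB: "wt B a"
    and eq: "valid_in M (eq_expr a A B)"
  shows "wt (fill K A) t \<Longrightarrow> assignment M \<phi> \<Longrightarrow> Val M \<phi> (fill K A) = Val M \<phi> (fill K B)"
proof (induction K arbitrary: t \<phi>)
  case Hole
  have fr: "frame M" using gm by (rule gm_frame)
  have d1: "Val M \<phi> A \<in> Dom M a" "Val M \<phi> B \<in> Dom M a"
    using gm_dom[OF gm Hole(2)] wA wB by blast+
  have wq: "wt (Con (Eq a)) (Fun a (Fun a Omic))" using wt_con[of "Eq a"] by simp
  have wq1: "wt (Ap (Con (Eq a)) A) (Fun a Omic)" using wq wA by (rule wt_ap)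
  have "Val M \<phi> (eq_expr a A B) = ap M (Val M \<phi> (Ap (Con (Eq a)) A)) (Val M \<phi> B)"
    using gm_ap[OF gm Hole(2) wq1 wB] .
  also have "Val M \<phi> (Ap (Con (Eq a)) A) = ap M (Icon M (Eq a)) (Val M \<phi> A)"
    using gm_ap[OF gm Hole(2) wq wA] gm_con[OF gm Hole(2)] by simp
  also have "ap M (ap M (Icon M (Eq a)) (Val M \<phi> A)) (Val M \<phi> B) = tv M (Val M \<phi> A = Val M \<phi> B)"
    using gm_eq[OF gm d1] .
  finally have "tv M (Val M \<phi> A = Val M \<phi> B) = tv M True"
    using eq Hole(2) unfolding valid_in_def by simp
  moreover have "inj (tv M)" using fr unfolding frame_def by blast
  ultimately show ?case by (auto dest: injD)
next
  case (CApL K E)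
  from CApL.prems obtain a' where w1: "wt (fill K A) (Fun a' t)" and w2: "wt E a'"
    by (auto elim!: wtE_ap)
  have w1': "wt (fill K B) (Fun a' t)" using wt_fill[OF w1 wA wB] .
  show ?case using gm_ap[OF gm CApL.prems(2) w1 w2] gm_ap[OF gm CApL.prems(2) w1' w2]
    CApL.IH[OF w1 CApL.prems(2)] by simp
next
  case (CApR F K)
  from CApR.prems obtain a' where w1: "wt F (Fun a' t)" and w2: "wt (fill K A) a'"
    by (auto elim!: wtE_ap)
  have w2': "wt (fill K B) a'" using wt_fill[OF w2 wA wB] .
  show ?case using gm_ap[OF gm CApR.prems(2) w1 w2] gm_ap[OF gm CApR.prems(2) w1 w2']
    CApR.IH[OF w2 CApR.prems(2)] by simp
next
  case (CLam x b K)
  from CLam.prems obtain c where t: "t = Fun b c" and w: "wt (fill K A) c"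
    by (auto elim!: wtE_lam)
  have w': "wt (fill K B) c" using wt_fill[OF w wA wB] .
  have fr: "frame M" using gm by (rule gm_frame)
  have wl1: "wt (Lam x b (fill K A)) (Fun b c)" using w by (rule wt_lam)
  have wl2: "wt (Lam x b (fill K B)) (Fun b c)" using w' by (rule wt_lam)
  have m1: "Val M \<phi> (Lam x b (fill K A)) \<in> Dom M (Fun b c)"
    using gm_dom[OF gm CLam.prems(2) wl1] .
  have m2: "Val M \<phi> (Lam x b (fill K B)) \<in> Dom M (Fun b c)"
    using gm_dom[OF gm CLam.prems(2) wl2] .
  have "\<forall>d\<in>Dom M b. ap M (Val M \<phi> (Lam x b (fill K A))) d = ap M (Val M \<phi> (Lam x b (fill K B))) d"
  proof
    fix d assume d: "d \<in> Dom M b"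
    have "ap M (Val M \<phi> (Lam x b (fill K A))) d = Val M (\<phi>((x, b) := d)) (fill K A)"
      using gm_lam[OF gm CLam.prems(2) w d] .
    also have "\<dots> = Val M (\<phi>((x, b) := d)) (fill K B)"
      using CLam.IH[OF w assign_upd[OF CLam.prems(2) d]] .
    also have "\<dots> = ap M (Val M \<phi> (Lam x b (fill K B))) d"
      using gm_lam[OF gm CLam.prems(2) w' d] by simp
    finally show "ap M (Val M \<phi> (Lam x b (fill K A))) d = ap M (Val M \<phi> (Lam x b (fill K B))) d" .
  qed
  moreover have "\<forall>f\<in>Dom M (Fun b c). \<forall>g\<in>Dom M (Fun b c).
        (\<forall>x\<in>Dom M b. ap M f x = ap M g x) \<longrightarrow> f = g" using fr unfolding frame_def by blast
  ultimately show ?case using m1 m2 by simp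
next
  case (CEvalL K E)
  from CEvalL.prems have w: "wt (fill K A) Eps" and wE: "wt E t"
    by (auto elim!: wtE_eval)
  have w': "wt (fill K B) Eps" using wt_fill[OF w wA wB] .
  have IH: "Val M \<phi> (fill K A) = Val M \<phi> (fill K B)" using CEvalL.IH[OF w CEvalL.prems(2)] .
  have fr: "frame M" using gm by (rule gm_frame)
  have wc: "wt (Con (IsExprT t)) (Fun Eps Omic)" using wt_con[of "IsExprT t"] by simp
  have wa: "wt (Ap (Con (IsExprT t)) (fill K A)) Omic" using wc w by (rule wt_ap)
  have same: "Val M \<phi> (Ap (Con (IsExprT t)) (fill K A)) = Val M \<phi> (Ap (Con (IsExprT t)) (fill K B))"
    using gm_ap[OF gm CEvalL.prems(2) wc w] gm_ap[OF gm CEvalL.prems(2) wc w'] IH by simp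
  have "Val M \<phi> (Ap (Con (IsExprT t)) (fill K A)) \<in> Dom M Omic"
    using gm_dom[OF gm CEvalL.prems(2) wa] .
  moreover have "Dom M Omic = range (tv M)" using fr unfolding frame_def by blast
  ultimately obtain v where v: "Val M \<phi> (Ap (Con (IsExprT t)) (fill K A)) = tv M v"
    by auto
  show ?case
  proof (cases v)
    case True
    show ?thesis using gm_evT[OF gm CEvalL.prems(2) w wE] gm_evT[OF gm CEvalL.prems(2) w' wE]
      v True same IH by simp
  next
    case False
    from gm_evF[OF gm] obtain d where d: "\<forall>\<phi> A E b. assignment M \<phi> \<longrightarrow> wt A Eps \<longrightarrow> wt E b \<longrightarrow>
             Val M \<phi> (Ap (Con (IsExprT b)) A) = tv M False \<longrightarrow>
             Val M \<phi> (Eval A E) = d b" by blast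
    have "Val M \<phi> (Eval (fill K A) E) = d t" using d[rule_format, OF CEvalL.prems(2) w wE] v False by simp
    moreover have "Val M \<phi> (Eval (fill K B) E) = d t"
      using d[rule_format, OF CEvalL.prems(2) w' wE] v False same by simp
    ultimately show ?thesis by simp
  qed
qed

theorem mainTheorem12:
  fixes M :: "'u model" and A B :: expr and a :: ty and K :: ctxt
  assumes "general_model M"
    and "wt A a" and "wt B a"
    and "wt (fill K A) Omic"
    and "valid_in M (eq_expr a A B)"
    and "valid_in M (fill K A)"
  shows "valid_in M (fill K B)"
  using assms(6) fill_eq[OF assms(1,2,3,5) assms(4)] unfolding valid_in_def by simp

end
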